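(* If $\otimes$ is the drastic minimum $T_d$ and $\oplus$ is a disjunctive uninorm, then $(\otimes,\oplus)$ satisfies the rearrangement inequality. If $\oplus$ is the drastic maximum $T_d'$ and $\otimes$ is a conjunctive uninorm, then $(\otimes,\oplus)$ satisfies the dual rearrangement inequality.
   Context: A uninorm is a function $\otimes:[0,1]^2\to[0,1]$ that is commutative, associative, monotonic ($x\leq y$ implies $x\otimes z\leq y\otimes z$), and has an identity element $e\in[0,1]$. A uninorm is conjunctive if $0\otimes 1=0$ and disjunctive if $0\otimes1=1$. The drastic minimum is $T_d(x,y)=\min(x,y)$ if $\max(x,y)=1$ and $0$ otherwise; the drastic maximum is $T_d'(x,y)=\max(x,y)$ if $\min(x,y)=0$ and $1$ otherwise. $(\otimes,\oplus)$ satisfies the rearrangement inequality if for every $n\geq1$, all $0\leq x_1\leq\cdots\leq x_n\leq 1$, $0\leq y_1\leq\cdots\leq y_n\leq 1$ and every permutation $\sigma$ of $\{1,\dots,n\}$, $$(x_n\otimes y_1)\oplus\cdots\oplus(x_1\otimes y_n)\leq (x_{\sigma(1)}\otimes y_1)\oplus\cdots\oplus(x_{\sigma(n)}\otimes y_n)\leq (x_1\otimes y_1)\oplus\cdots\oplus(x_n\otimes y_n),$$ and the dual rearrangement inequality if for all such data $$(x_n\oplus y_1)\otimes\cdots\otimes(x_1\oplus y_n)\geq (x_{\sigma(1)}\oplus y_1)\otimes\cdots\otimes(x_{\sigma(n)}\oplus y_n)\geq (x_1\oplus y_1)\otimes\cdots\otimes(x_n\oplus y_n).$$ *)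

theory Defs
  imports Complex_Main "HOL-Combinatorics.Permutations"
begin

definition uninorm :: "(real \<Rightarrow> real \<Rightarrow> real) \<Rightarrow> bool" where
  "uninorm U \<longleftrightarrow>
     (\<forall>x\<in>{0..1}. \<forall>y\<in>{0..1}. U x y \<in> {0..1}) \<and>
     (\<forall>x\<in>{0..1}. \<forall>y\<in>{0..1}. U x y = U y x) \<and>
     (\<forall>x\<in>{0..1}. \<forall>y\<in>{0..1}. \<forall>z\<in>{0..1}. U (U x y) z = U x (U y z)) \<and>
     (\<forall>x\<in>{0..1}. \<forall>y\<in>{0..1}. \<forall>z\<in>{0..1}. x \<le> y \<longrightarrow> U x z \<le> U y z) \<and>
     (\<exists>e\<in>{0..1}. \<forall>x\<in>{0..1}. U e x = x)"

definition conjunctive_uninorm :: "(real \<Rightarrow> real \<Rightarrow> real) \<Rightarrow> bool" where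
  "conjunctive_uninorm U \<longleftrightarrow> uninorm U \<and> U 0 1 = 0"

definition disjunctive_uninorm :: "(real \<Rightarrow> real \<Rightarrow> real) \<Rightarrow> bool" where
  "disjunctive_uninorm U \<longleftrightarrow> uninorm U \<and> U 0 1 = 1"

definition drastic_min :: "real \<Rightarrow> real \<Rightarrow> real" where
  "drastic_min x y = (if max x y = 1 then min x y else 0)"

definition drastic_max :: "real \<Rightarrow> real \<Rightarrow> real" where
  "drastic_max x y = (if min x y = 0 then max x y else 1)"

fun iter :: "(real \<Rightarrow> real \<Rightarrow> real) \<Rightarrow> (nat \<Rightarrow> real) \<Rightarrow> nat \<Rightarrow> real" where
  "iter F g 0 = g 0"
| "iter F g (Suc 0) = g 1"
| "iter F g (Suc (Suc n)) = F (iter F g (Suc n)) (g (Suc (Suc n)))"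

definition rearrangement_ineq ::
  "(real \<Rightarrow> real \<Rightarrow> real) \<Rightarrow> (real \<Rightarrow> real \<Rightarrow> real) \<Rightarrow> bool" where
  "rearrangement_ineq T S \<longleftrightarrow>
    (\<forall>n::nat. \<forall>x y :: nat \<Rightarrow> real. \<forall>\<sigma>.
       n \<ge> 1 \<longrightarrow>
       (\<forall>i\<in>{1..n}. 0 \<le> x i \<and> x i \<le> 1 \<and> 0 \<le> y i \<and> y i \<le> 1) \<longrightarrow>
       (\<forall>i j. 1 \<le> i \<longrightarrow> i \<le> j \<longrightarrow> j \<le> n \<longrightarrow> x i \<le> x j \<and> y i \<le> y j) \<longrightarrow>
       \<sigma> permutes {1..n} \<longrightarrow>
       iter S (\<lambda>i. T (x (n + 1 - i)) (y i)) n \<le> iter S (\<lambda>i. T (x (\<sigma> i)) (y i)) n \<and>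
       iter S (\<lambda>i. T (x (\<sigma> i)) (y i)) n \<le> iter S (\<lambda>i. T (x i) (y i)) n)"

definition dual_rearrangement_ineq ::
  "(real \<Rightarrow> real \<Rightarrow> real) \<Rightarrow> (real \<Rightarrow> real \<Rightarrow> real) \<Rightarrow> bool" where
  "dual_rearrangement_ineq T S \<longleftrightarrow>
    (\<forall>n::nat. \<forall>x y :: nat \<Rightarrow> real. \<forall>\<sigma>.
       n \<ge> 1 \<longrightarrow>
       (\<forall>i\<in>{1..n}. 0 \<le> x i \<and> x i \<le> 1 \<and> 0 \<le> y i \<and> y i \<le> 1) \<longrightarrow>
       (\<forall>i j. 1 \<le> i \<longrightarrow> i \<le> j \<longrightarrow> j \<le> n \<longrightarrow> x i \<le> x j \<and> y i \<le> y j) \<longrightarrow>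
       \<sigma> permutes {1..n} \<longrightarrow>
       iter T (\<lambda>i. S (x (n + 1 - i)) (y i)) n \<ge> iter T (\<lambda>i. S (x (\<sigma> i)) (y i)) n \<and>
       iter T (\<lambda>i. S (x (\<sigma> i)) (y i)) n \<ge> iter T (\<lambda>i. S (x i) (y i)) n)"

end

theory Submission
  imports Defs "HOL-Library.Multiset"
begin


definition clip :: "real \<Rightarrow> real" where "clip a = max 0 (min 1 a)"
definition Uc :: "(real \<Rightarrow> real \<Rightarrow> real) \<Rightarrow> real \<Rightarrow> real \<Rightarrow> real" where
  "Uc U a b = U (clip a) (clip b)"
definition unit_of :: "(real \<Rightarrow> real \<Rightarrow> real) \<Rightarrow> real" where
  "unit_of U = (SOME e. e \<in> {0..1} \<and> (\<forall>x\<in>{0..1}. U e x = x))"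
definition Phi :: "(real \<Rightarrow> real \<Rightarrow> real) \<Rightarrow> real multiset \<Rightarrow> real" where
  "Phi U M = fold_mset (Uc U) (unit_of U) M"

lemma clip_id: "a \<in> {0..1} \<Longrightarrow> clip a = a" by (auto simp: clip_def)
lemma clip_rng: "clip a \<in> {0..1}" by (auto simp: clip_def)

lemma un_rng: "uninorm U \<Longrightarrow> a \<in> {0..1} \<Longrightarrow> b \<in> {0..1} \<Longrightarrow> U a b \<in> {0..1}"
  unfolding uninorm_def by blast
lemma un_comm: "uninorm U \<Longrightarrow> a \<in> {0..1} \<Longrightarrow> b \<in> {0..1} \<Longrightarrow> U a b = U b a"
  unfolding uninorm_def by blast
lemma un_assoc: "uninorm U \<Longrightarrow> a \<in> {0..1} \<Longrightarrow> b \<in> {0..1} \<Longrightarrow> c \<in> {0..1} \<Longrightarrow> U (U a b) c = U a (U b c)"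
  unfolding uninorm_def by blast
lemma un_mono1: "uninorm U \<Longrightarrow> a \<in> {0..1} \<Longrightarrow> b \<in> {0..1} \<Longrightarrow> c \<in> {0..1} \<Longrightarrow> a \<le> b \<Longrightarrow> U a c \<le> U b c"
  unfolding uninorm_def by blast
lemma un_mono2: "uninorm U \<Longrightarrow> a \<in> {0..1} \<Longrightarrow> b \<in> {0..1} \<Longrightarrow> c \<in> {0..1} \<Longrightarrow> a \<le> b \<Longrightarrow> U c a \<le> U c b"
  using un_mono1[of U a b c] un_comm[of U c a] un_comm[of U c b] by simp
lemma un_unit_ex: "uninorm U \<Longrightarrow> \<exists>e. e \<in> {0..1} \<and> (\<forall>x\<in>{0..1}. U e x = x)"
  unfolding uninorm_def by blast
lemma unit_of: "uninorm U \<Longrightarrow> unit_of U \<in> {0..1} \<and> (\<forall>x\<in>{0..1}. U (unit_of U) x = x)"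
  unfolding unit_of_def by (rule someI_ex, erule un_unit_ex)
lemma unit_of_unique: assumes "uninorm U" "e \<in> {0..1}" "\<forall>x\<in>{0..1}. U e x = x"
  shows "unit_of U = e"
proof -
  have "unit_of U = U e (unit_of U)" using assms unit_of[OF assms(1)] by auto
  also have "\<dots> = U (unit_of U) e" using un_comm assms unit_of[OF assms(1)] by blast
  also have "\<dots> = e" using assms unit_of[OF assms(1)] by auto
  finally show ?thesis .
qed

lemma Uc_cfc: assumes "uninorm U" shows "comp_fun_commute (Uc U)"
proof
  fix a b
  show "Uc U b \<circ> Uc U a = Uc U a \<circ> Uc U b"
  proof
    fix z
    have r: "\<And>p q. Uc U p q \<in> {0..1}" unfolding Uc_def using un_rng[OF assms] clip_rng by blast
    have ca: "clip a \<in> {0..1}" and cb: "clip b \<in> {0..1}" and cz: "clip z \<in> {0..1}" by (rule clip_rng)+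
    have "(Uc U b \<circ> Uc U a) z = U (clip b) (U (clip a) (clip z))"
      using r[of a z] by (simp add: Uc_def clip_id)
    also have "\<dots> = U (U (clip b) (clip a)) (clip z)" using un_assoc[OF assms cb ca cz] by simp
    also have "\<dots> = U (U (clip a) (clip b)) (clip z)" using un_comm[OF assms ca cb] by simp
    also have "\<dots> = U (clip a) (U (clip b) (clip z))" using un_assoc[OF assms ca cb cz] by simp
    also have "\<dots> = (Uc U a \<circ> Uc U b) z"
      using r[of b z] by (simp add: Uc_def clip_id)
    finally show "(Uc U b \<circ> Uc U a) z = (Uc U a \<circ> Uc U b) z" .
  qed
qed

lemma Phi_empty: "Phi U {#} = unit_of U" by (simp add: Phi_def)

lemma Phi_rng: assumes "uninorm U" shows "Phi U M \<in> {0..1}"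
proof (cases M)
  case empty then show ?thesis using unit_of[OF assms] by (simp add: Phi_def)
next
  case (add x N)
  then show ?thesis using comp_fun_commute.fold_mset_add_mset[OF Uc_cfc[OF assms]]
    un_rng[OF assms] clip_rng by (simp add: Phi_def Uc_def)
qed

lemma Phi_add: assumes "uninorm U" "a \<in> {0..1}" shows "Phi U (add_mset a M) = U a (Phi U M)"
  using comp_fun_commute.fold_mset_add_mset[OF Uc_cfc[OF assms(1)]] Phi_rng[OF assms(1), of M] assms
  by (simp add: Phi_def Uc_def clip_id)

lemma Phi_one: assumes "disjunctive_uninorm U" "1 \<in># M" shows "Phi U M = 1"
proof -
  have u: "uninorm U" and d: "U 0 1 = 1" using assms by (auto simp: disjunctive_uninorm_def)
  obtain N where M: "M = add_mset 1 N" using assms(2) by (metis multi_member_split)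
  have p: "Phi U N \<in> {0..1}" by (rule Phi_rng[OF u])
  have "U 1 (Phi U N) = U (Phi U N) 1" using un_comm[OF u] p by auto
  moreover have "U 0 1 \<le> U (Phi U N) 1" using un_mono1[OF u, of 0 "Phi U N" 1] p by auto
  moreover have "U (Phi U N) 1 \<in> {0..1}" using un_rng[OF u] p by auto
  ultimately show ?thesis using M Phi_add[OF u, of 1 N] d by auto
qed

lemma Phi_mono0:
  fixes M N :: "real multiset"
  assumes u: "uninorm U"
  shows "rel_mset (\<le>) M N \<Longrightarrow> set_mset M \<subseteq> {0..1} \<Longrightarrow> set_mset N \<subseteq> {0..1} \<Longrightarrow> Phi U M \<le> Phi U N"
proof (induction M arbitrary: N)
  case empty then show ?case by simp
next
  case (add a M N0)
  obtain N b where N0: "N0 = add_mset b N" and le: "a \<le> b" and r: "rel_mset (\<le>) M N"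
    using msed_rel_invL[OF add.prems(1)] by blast
  have ab: "a \<in> {0..1}" "b \<in> {0..1}" using add.prems N0 by auto
  have "Phi U M \<le> Phi U N" using add.IH[OF r] add.prems N0 by auto
  have p: "Phi U M \<in> {0..1}" "Phi U N \<in> {0..1}" using Phi_rng[OF u] by auto
  have "U a (Phi U M) \<le> U b (Phi U M)" by (rule un_mono1[OF u ab p(1) le])
  also have "\<dots> \<le> U b (Phi U N)" by (rule un_mono2[OF u p ab(2)]) fact
  finally show ?case using Phi_add[OF u] ab N0 by simp
qed

lemma Phi_mono: "uninorm U \<Longrightarrow> rel_mset (\<le>) M N \<Longrightarrow> set_mset M \<subseteq> {0..1} \<Longrightarrow> set_mset N \<subseteq> {0..1} \<Longrightarrow> Phi U M \<le> Phi U N"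
  using Phi_mono0 by blast

lemma rel_all: "size M = size N \<Longrightarrow> \<forall>a\<in>#M. \<forall>b\<in>#N. R a b \<Longrightarrow> rel_mset R M N"
proof (induction M arbitrary: N)
  case empty then show ?case by (simp add: rel_mset_Zero)
next
  case (add x M)
  then obtain b N' where N: "N = add_mset b N'" by (metis size_eq_Suc_imp_eq_union size_add_mset)
  then show ?case using add by (auto intro!: rel_mset_Plus)
qed

lemma rel_plus: "rel_mset R A B \<Longrightarrow> rel_mset R C D \<Longrightarrow> rel_mset R (A + C) (B + D)"
  by (induction rule: rel_mset_induct) (auto intro: rel_mset_Plus)

lemma rel_refl: "\<forall>a\<in>#A. R a a \<Longrightarrow> rel_mset R A A"
  by (induction A) (auto intro: rel_mset_Plus rel_mset_Zero)

lemma mset_split: "finite I \<Longrightarrow> X \<subseteq> I \<Longrightarrow>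
  image_mset f (mset_set I) = image_mset f (mset_set X) + image_mset f (mset_set (I - X))"
proof -
  assume a: "finite I" "X \<subseteq> I"
  have "mset_set (X \<union> (I - X)) = mset_set X + mset_set (I - X)"
    by (rule mset_set_Union) (use a finite_subset in auto)
  moreover have "X \<union> (I - X) = I" using a by blast
  ultimately show ?thesis by simp
qed

lemma swap_rel: assumes "finite C" "finite B" "card C = card B" "\<forall>i\<in>C-B. \<forall>j\<in>B-C. f i \<le> (f j::real)"
  shows "rel_mset (\<le>) (image_mset f (mset_set C)) (image_mset f (mset_set B))"
proof -
  have c: "image_mset f (mset_set C) = image_mset f (mset_set (C \<inter> B)) + image_mset f (mset_set (C - (C \<inter> B)))"
    using mset_split[of C "C \<inter> B"] assms by auto
  have b: "image_mset f (mset_set B) = image_mset f (mset_set (C \<inter> B)) + image_mset f (mset_set (B - (C \<inter> B)))"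
    using mset_split[of B "C \<inter> B"] assms by auto
  have cc: "card (C - (C \<inter> B)) = card (B - (C \<inter> B))"
  proof -
    have "card (C - (C \<inter> B)) = card C - card (C \<inter> B)" using assms by (simp add: card_Diff_subset)
    moreover have "card (B - (C \<inter> B)) = card B - card (C \<inter> B)" using assms by (simp add: card_Diff_subset)
    ultimately show ?thesis using assms by simp
  qed
  have r2: "rel_mset (\<le>) (image_mset f (mset_set (C - (C \<inter> B)))) (image_mset f (mset_set (B - (C \<inter> B))))"
    apply (rule rel_all) using cc assms(1,2,4) by auto
  have r1: "rel_mset (\<le>) (image_mset f (mset_set (C \<inter> B))) (image_mset f (mset_set (C \<inter> B)))"
    by (rule rel_refl) simp
  show ?thesis unfolding c b by (rule rel_plus[OF r1 r2])
qed

lemma reindex: "bij_betw h I I \<Longrightarrow> image_mset f (mset_set I) = image_mset (\<lambda>i. f (h i)) (mset_set I)"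
proof -
  assume a: "bij_betw h I I"
  have inj: "inj_on h I" and hI: "h ` I = I" using a by (auto simp: bij_betw_def)
  have "image_mset h (mset_set I) = mset_set I" using image_mset_mset_set[OF inj] hI by simp
  then have "image_mset f (image_mset h (mset_set I)) = image_mset f (mset_set I)" by simp
  then show ?thesis by (simp add: image_mset.compositionality comp_def)
qed



lemma dmin_vals: "a \<in> {0..1} \<Longrightarrow> b \<in> {0..1} \<Longrightarrow>
  drastic_min a b = (if b = 1 then a else if a = 1 then b else 0)"
  by (auto simp: drastic_min_def max_def min_def)

lemma dmin_rng: "a \<in> {0..1} \<Longrightarrow> b \<in> {0..1} \<Longrightarrow> drastic_min a b \<in> {0..1}"
  by (auto simp: drastic_min_def max_def min_def)

lemma rev_bij: "bij_betw (\<lambda>i. n + 1 - i) {1..n} {1..(n::nat)}"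
  by (rule bij_betw_byWitness[where f' = "\<lambda>i. n + 1 - i"]) auto

lemma card_pre: assumes "bij_betw \<tau> I I"
  shows "card {i\<in>I. P (\<tau> i)} = card {j\<in>I. P j}"
proof -
  have "\<tau> ` {i\<in>I. P (\<tau> i)} = {j\<in>I. P j}"
    using assms by (auto simp: bij_betw_def)
  moreover have "inj_on \<tau> {i\<in>I. P (\<tau> i)}" using assms by (auto simp: bij_betw_def intro: inj_on_subset)
  ultimately show ?thesis by (metis card_image)
qed

lemma struct:
  fixes x y :: "nat \<Rightarrow> real"
  assumes rng: "\<forall>i\<in>{1..n}. x i \<in> {0..1} \<and> y i \<in> {0..1}"
    and bij: "bij_betw \<tau> {1..n} {1..n}"
    and disj: "\<forall>i\<in>{1..n}. y i = 1 \<longrightarrow> x (\<tau> i) \<noteq> 1"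
  shows "image_mset (\<lambda>i. drastic_min (x (\<tau> i)) (y i)) (mset_set {1..n}) =
    image_mset x (mset_set (\<tau> ` {i\<in>{1..n}. y i = 1})) + image_mset y (mset_set {i\<in>{1..n}. x (\<tau> i) = 1})
    + image_mset (\<lambda>_. 0) (mset_set ({1..n} - {i\<in>{1..n}. y i = 1} - {i\<in>{1..n}. x (\<tau> i) = 1}))"
proof -
  define I where "I = {1..n}"
  define B where "B = {i\<in>I. y i = 1}"
  define S where "S = {i\<in>I. x (\<tau> i) = 1}"
  define t where "t = (\<lambda>i. drastic_min (x (\<tau> i)) (y i))"
  have tI: "\<tau> i \<in> I" if "i \<in> I" for i using bij that unfolding I_def by (meson bij_betw_apply)
  have fin: "finite I" unfolding I_def by simp
  have h1: "image_mset t (mset_set I) = image_mset t (mset_set B) + image_mset t (mset_set (I - B))"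
    by (rule mset_split[OF fin]) (auto simp: B_def)
  have h2: "image_mset t (mset_set (I - B)) = image_mset t (mset_set S) + image_mset t (mset_set (I - B - S))"
    by (rule mset_split) (use fin disj in \<open>auto simp: S_def B_def I_def\<close>)
  have h3: "image_mset t (mset_set B) = image_mset x (mset_set (\<tau> ` B))"
  proof -
    have "image_mset t (mset_set B) = image_mset (\<lambda>i. x (\<tau> i)) (mset_set B)"
    proof (rule image_mset_cong)
      fix i assume "i \<in># mset_set B"
      then have "i \<in> B" using fin by (metis B_def elem_mset_set finite_subset mem_Collect_eq subsetI)
      then show "t i = x (\<tau> i)" using rng tI[of i] unfolding t_def B_def I_def by (auto simp: dmin_vals)
    qed
    also have "\<dots> = image_mset x (image_mset \<tau> (mset_set B))" by (simp add: image_mset.compositionality comp_def)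
    also have "image_mset \<tau> (mset_set B) = mset_set (\<tau> ` B)"
      by (rule image_mset_mset_set) (use bij in \<open>auto simp: bij_betw_def B_def I_def intro: inj_on_subset\<close>)
    finally show ?thesis .
  qed
  have h4: "image_mset t (mset_set S) = image_mset y (mset_set S)"
  proof (rule image_mset_cong)
    fix i assume "i \<in># mset_set S"
    then have "i \<in> S" using fin by (metis S_def elem_mset_set finite_subset mem_Collect_eq subsetI)
    then show "t i = y i" using rng tI[of i] unfolding t_def S_def I_def by (auto simp: dmin_vals)
  qed
  have h5: "image_mset t (mset_set (I - B - S)) = image_mset (\<lambda>_. 0) (mset_set (I - B - S))"
  proof (rule image_mset_cong)
    fix i assume "i \<in># mset_set (I - B - S)"
    then have "i \<in> I - B - S" using fin by (metis elem_mset_set finite_Diff)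
    then show "t i = 0" using rng tI[of i] unfolding t_def S_def B_def I_def by (auto simp: dmin_vals)
  qed
  show ?thesis using h1 h2 h3 h4 h5 unfolding t_def I_def B_def S_def by (simp add: add.assoc)
qed


lemma img_set: "finite X \<Longrightarrow> set_mset (image_mset f (mset_set X)) = f ` X" by simp

lemma p1_upper:
  fixes x y :: "nat \<Rightarrow> real"
  assumes d: "disjunctive_uninorm U" and n: "n \<ge> 1"
    and rng: "\<forall>i\<in>{1..n}. x i \<in> {0..1} \<and> y i \<in> {0..1}"
    and srt: "\<forall>i j. 1 \<le> i \<longrightarrow> i \<le> j \<longrightarrow> j \<le> n \<longrightarrow> x i \<le> x j \<and> y i \<le> y j"
    and bij: "bij_betw \<tau> {1..n} {1..n}"
  shows "Phi U (image_mset (\<lambda>i. drastic_min (x (\<tau> i)) (y i)) (mset_set {1..n}))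
       \<le> Phi U (image_mset (\<lambda>i. drastic_min (x i) (y i)) (mset_set {1..n}))"
proof -
  have u: "uninorm U" using d by (simp add: disjunctive_uninorm_def)
  define I where "I = {1..n}"
  have fin: "finite I" unfolding I_def by simp
  have tI: "\<tau> i \<in> I" if "i \<in> I" for i using bij that unfolding I_def by (meson bij_betw_apply)
  have idb: "bij_betw (\<lambda>i. i) I I" by (simp add: bij_betw_def)
  define M1 where "M1 = image_mset (\<lambda>i. drastic_min (x (\<tau> i)) (y i)) (mset_set I)"
  define M2 where "M2 = image_mset (\<lambda>i. drastic_min (x i) (y i)) (mset_set I)"
  have s1: "set_mset M1 \<subseteq> {0..1}" unfolding M1_def using fin tI rng dmin_rng unfolding I_def by auto
  have s2: "set_mset M2 \<subseteq> {0..1}" unfolding M2_def using fin rng dmin_rng unfolding I_def by auto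
  have "Phi U M1 \<le> Phi U M2"
  proof (cases "x n = 1 \<and> y n = 1")
    case True
    have "n \<in> I" using n unfolding I_def by simp
    then have "1 \<in># M2" unfolding M2_def using fin True by (force simp: drastic_min_def)
    then show ?thesis using Phi_one[OF d] Phi_rng[OF u, of M1] by simp
  next
    case False
    have disj1: "\<forall>i\<in>{1..n}. y i = 1 \<longrightarrow> x (\<tau> i) \<noteq> 1"
    proof (intro ballI impI notI)
      fix i assume i: "i \<in> {1..n}" "y i = 1" "x (\<tau> i) = 1"
      have "y i \<le> y n" using srt i by auto
      moreover have "x (\<tau> i) \<le> x n" using srt tI[of i] i unfolding I_def by auto
      moreover have "x n \<le> 1" "y n \<le> 1" using rng n by auto
      ultimately show False using False i by auto
    qed
    have disj2: "\<forall>i\<in>{1..n}. y i = 1 \<longrightarrow> x i \<noteq> 1"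
    proof (intro ballI impI notI)
      fix i assume i: "i \<in> {1..n}" "y i = 1" "x i = 1"
      have "y i \<le> y n" "x i \<le> x n" using srt i by auto
      moreover have "x n \<le> 1" "y n \<le> 1" using rng n by auto
      ultimately show False using False i by auto
    qed
    define B where "B = {i\<in>I. y i = 1}"
    define S where "S = {i\<in>I. x (\<tau> i) = 1}"
    define A where "A = {i\<in>I. x i = 1}"
    have e1: "M1 = image_mset x (mset_set (\<tau> ` B)) + image_mset y (mset_set S) + image_mset (\<lambda>_. 0) (mset_set (I - B - S))"
      unfolding M1_def B_def S_def I_def by (rule struct[OF rng bij disj1])
    have e2: "M2 = image_mset x (mset_set ((\<lambda>i. i) ` B)) + image_mset y (mset_set A) + image_mset (\<lambda>_. 0) (mset_set (I - B - A))"
      unfolding M2_def B_def A_def I_def by (rule struct[OF rng idb[unfolded I_def] disj2])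
    have BI: "B \<subseteq> I" unfolding B_def by auto
    have cB: "card (\<tau> ` B) = card B"
      by (rule card_image) (use bij BI in \<open>auto simp: bij_betw_def I_def intro: inj_on_subset\<close>)
    have cS: "card S = card A" unfolding S_def A_def by (rule card_pre) (use bij in \<open>simp add: I_def\<close>)
    have tB: "\<tau> ` B \<subseteq> I" using tI BI by auto
    have r1: "rel_mset (\<le>) (image_mset x (mset_set (\<tau> ` B))) (image_mset x (mset_set B))"
    proof (rule swap_rel)
      show "finite (\<tau> ` B)" "finite B" using fin BI tB finite_subset by auto
      show "card (\<tau> ` B) = card B" by (rule cB)
      show "\<forall>i\<in>\<tau> ` B - B. \<forall>j\<in>B - \<tau> ` B. x i \<le> x j"
      proof (intro ballI)
        fix i j assume i: "i \<in> \<tau> ` B - B" and j: "j \<in> B - \<tau> ` B"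
        have iI: "i \<in> I" using i tB by auto
        have yi: "y i \<noteq> 1" using i iI unfolding B_def by auto
        have yj: "y j = 1" "j \<in> I" using j unfolding B_def by auto
        have "i \<le> j"
        proof (rule ccontr)
          assume "\<not> i \<le> j"
          then have "y j \<le> y i" using srt yj iI unfolding I_def by auto
          moreover have "y i \<le> 1" using rng iI unfolding I_def by auto
          ultimately show False using yi yj by auto
        qed
        then show "x i \<le> x j" using srt iI yj unfolding I_def by auto
      qed
    qed
    have r2: "rel_mset (\<le>) (image_mset y (mset_set S)) (image_mset y (mset_set A))"
    proof (rule swap_rel)
      show "finite S" "finite A" using fin unfolding S_def A_def by auto
      show "card S = card A" by (rule cS)
      show "\<forall>i\<in>S - A. \<forall>j\<in>A - S. y i \<le> y j"
      proof (intro ballI)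
        fix i j assume i: "i \<in> S - A" and j: "j \<in> A - S"
        have iI: "i \<in> I" and xi: "x i \<noteq> 1" using i unfolding S_def A_def by auto
        have xj: "x j = 1" "j \<in> I" using j unfolding A_def by auto
        have "i \<le> j"
        proof (rule ccontr)
          assume "\<not> i \<le> j"
          then have "x j \<le> x i" using srt xj iI unfolding I_def by auto
          moreover have "x i \<le> 1" using rng iI unfolding I_def by auto
          ultimately show False using xi xj by auto
        qed
        then show "y i \<le> y j" using srt iI xj unfolding I_def by auto
      qed
    qed
    have sz: "size M1 = size M2" unfolding M1_def M2_def by simp
    have "size (image_mset (\<lambda>_. 0::real) (mset_set (I - B - S))) = size (image_mset (\<lambda>_. 0::real) (mset_set (I - B - A)))"
      using sz cB cS unfolding e1 e2 by simp
    then have r3: "rel_mset (\<le>) (image_mset (\<lambda>_. 0::real) (mset_set (I - B - S))) (image_mset (\<lambda>_. 0::real) (mset_set (I - B - A)))"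
      by (rule rel_all) simp
    have "rel_mset (\<le>) M1 M2" unfolding e1 e2 using rel_plus[OF rel_plus[OF r1 r2] r3] by simp
    then show ?thesis using Phi_mono[OF u _ s1 s2] by simp
  qed
  then show ?thesis unfolding M1_def M2_def I_def .
qed


lemma p1_lower:
  fixes x y :: "nat \<Rightarrow> real"
  assumes d: "disjunctive_uninorm U" and n: "n \<ge> 1"
    and rng: "\<forall>i\<in>{1..n}. x i \<in> {0..1} \<and> y i \<in> {0..1}"
    and srt: "\<forall>i j. 1 \<le> i \<longrightarrow> i \<le> j \<longrightarrow> j \<le> n \<longrightarrow> x i \<le> x j \<and> y i \<le> y j"
    and bij: "bij_betw \<tau> {1..n} {1..n}"
  shows "Phi U (image_mset (\<lambda>i. drastic_min (x (n + 1 - i)) (y i)) (mset_set {1..n}))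
       \<le> Phi U (image_mset (\<lambda>i. drastic_min (x (\<tau> i)) (y i)) (mset_set {1..n}))"
proof -
  have u: "uninorm U" using d by (simp add: disjunctive_uninorm_def)
  define I where "I = {1..n}"
  define r where "r = (\<lambda>i::nat. n + 1 - i)"
  have fin: "finite I" unfolding I_def by simp
  have tI: "\<tau> i \<in> I" if "i \<in> I" for i using bij that unfolding I_def by (meson bij_betw_apply)
  have rb: "bij_betw r I I" unfolding r_def I_def by (rule rev_bij)
  have rI: "r i \<in> I" if "i \<in> I" for i using that unfolding r_def I_def by auto
  define M1 where "M1 = image_mset (\<lambda>i. drastic_min (x (r i)) (y i)) (mset_set I)"
  define M2 where "M2 = image_mset (\<lambda>i. drastic_min (x (\<tau> i)) (y i)) (mset_set I)"
  have s1: "set_mset M1 \<subseteq> {0..1}" unfolding M1_def using fin rI rng dmin_rng unfolding I_def by auto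
  have s2: "set_mset M2 \<subseteq> {0..1}" unfolding M2_def using fin tI rng dmin_rng unfolding I_def by auto
  have "Phi U M1 \<le> Phi U M2"
  proof (cases "\<exists>i\<in>I. y i = 1 \<and> x (\<tau> i) = 1")
    case True
    then obtain i where i: "i \<in> I" "y i = 1" "x (\<tau> i) = 1" by blast
    then have "1 \<in># M2" unfolding M2_def using fin by (force simp: drastic_min_def)
    then show ?thesis using Phi_one[OF d] Phi_rng[OF u, of M1] by simp
  next
    case False
    have disj2: "\<forall>i\<in>{1..n}. y i = 1 \<longrightarrow> x (\<tau> i) \<noteq> 1" using False unfolding I_def by blast
    define B where "B = {i\<in>I. y i = 1}"
    define S where "S = {i\<in>I. x (\<tau> i) = 1}"
    define Sr where "Sr = {i\<in>I. x (r i) = 1}"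
    define A where "A = {i\<in>I. x i = 1}"
    have BI: "B \<subseteq> I" unfolding B_def by auto
    have cS: "card S = card A" unfolding S_def A_def by (rule card_pre) (use bij in \<open>simp add: I_def\<close>)
    have cSr: "card Sr = card A" unfolding Sr_def A_def by (rule card_pre[OF rb])
    have disj1: "\<forall>i\<in>{1..n}. y i = 1 \<longrightarrow> x (r i) \<noteq> 1"
    proof (intro ballI impI notI)
      fix i assume i: "i \<in> {1..n}" "y i = 1" "x (r i) = 1"
      have "{i..n} \<subseteq> B"
      proof
        fix k assume k: "k \<in> {i..n}"
        then have "y i \<le> y k" "y k \<le> 1" using srt rng i by auto
        then show "k \<in> B" using k i unfolding B_def I_def by auto
      qed
      then have cB: "card B \<ge> n + 1 - i" using card_mono[OF _ \<open>{i..n} \<subseteq> B\<close>] fin BI finite_subset by fastforce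
      have "{n + 1 - i..n} \<subseteq> A"
      proof
        fix k assume k: "k \<in> {n + 1 - i..n}"
        have "r i \<in> I" using rI i unfolding I_def by auto
        then have "x (r i) \<le> x k" "x k \<le> 1" using srt rng i k unfolding r_def I_def by auto
        then show "k \<in> A" using k i unfolding A_def I_def by auto
      qed
      then have cA: "card A \<ge> i" using card_mono[OF _ \<open>{n + 1 - i..n} \<subseteq> A\<close>] fin i finite_subset
        unfolding A_def by fastforce
      have "B \<inter> S = {}" using False unfolding B_def S_def by auto
      moreover have "B \<union> S \<subseteq> I" unfolding B_def S_def by auto
      moreover have "finite B" "finite S" using fin unfolding B_def S_def by auto
      ultimately have "card B + card S \<le> n"
        using card_Un_disjoint[of B S] card_mono[OF fin, of "B \<union> S"] unfolding I_def by simp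
      then show False using cB cA cS i by simp
    qed
    have e1: "M1 = image_mset x (mset_set (r ` B)) + image_mset y (mset_set Sr) + image_mset (\<lambda>_. 0) (mset_set (I - B - Sr))"
      unfolding M1_def B_def Sr_def I_def by (rule struct[OF rng rb[unfolded I_def] disj1])
    have e2: "M2 = image_mset x (mset_set (\<tau> ` B)) + image_mset y (mset_set S) + image_mset (\<lambda>_. 0) (mset_set (I - B - S))"
      unfolding M2_def B_def S_def I_def by (rule struct[OF rng bij disj2])
    have cB: "card (\<tau> ` B) = card B"
      by (rule card_image) (use bij BI in \<open>auto simp: bij_betw_def I_def intro: inj_on_subset\<close>)
    have cBr: "card (r ` B) = card B"
      by (rule card_image) (use rb BI in \<open>auto simp: bij_betw_def intro: inj_on_subset\<close>)
    have tB: "\<tau> ` B \<subseteq> I" using tI BI by auto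
    have rB: "r ` B \<subseteq> I" using rI BI by auto
    have r1: "rel_mset (\<le>) (image_mset x (mset_set (r ` B))) (image_mset x (mset_set (\<tau> ` B)))"
    proof (rule swap_rel)
      show "finite (r ` B)" "finite (\<tau> ` B)" using fin rB tB finite_subset by auto
      show "card (r ` B) = card (\<tau> ` B)" using cB cBr by simp
      show "\<forall>i\<in>r ` B - \<tau> ` B. \<forall>j\<in>\<tau> ` B - r ` B. x i \<le> x j"
      proof (intro ballI)
        fix i j assume i: "i \<in> r ` B - \<tau> ` B" and j: "j \<in> \<tau> ` B - r ` B"
        obtain k where k: "k \<in> B" "i = r k" using i by auto
        have iI: "i \<in> I" using i rB by auto
        have jI: "j \<in> I" using j tB by auto
        have kI: "k \<in> I" and yk: "y k = 1" using k unfolding B_def by auto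
        have "i \<le> j"
        proof (rule ccontr)
          assume "\<not> i \<le> j"
          then have lt: "j < i" by simp
          define k' where "k' = r j"
          have k'I: "k' \<in> I" using rI[OF jI] unfolding k'_def .
          have "k < k'" using lt k(2) kI jI unfolding k'_def r_def I_def by auto
          then have "y k \<le> y k'" using srt kI k'I unfolding I_def by auto
          moreover have "y k' \<le> 1" using rng k'I unfolding I_def by auto
          ultimately have "k' \<in> B" using yk k'I unfolding B_def by auto
          moreover have "r k' = j" using jI unfolding k'_def r_def I_def by auto
          ultimately have "j \<in> r ` B" by blast
          then show False using j by blast
        qed
        then show "x i \<le> x j" using srt iI jI unfolding I_def by auto
      qed
    qed
    have r2: "rel_mset (\<le>) (image_mset y (mset_set Sr)) (image_mset y (mset_set S))"
    proof (rule swap_rel)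
      show "finite Sr" "finite S" using fin unfolding Sr_def S_def by auto
      show "card Sr = card S" using cS cSr by simp
      show "\<forall>i\<in>Sr - S. \<forall>j\<in>S - Sr. y i \<le> y j"
      proof (intro ballI)
        fix i j assume i: "i \<in> Sr - S" and j: "j \<in> S - Sr"
        have iI: "i \<in> I" and xi: "x (r i) = 1" using i unfolding Sr_def by auto
        have jI: "j \<in> I" and xj: "x (r j) \<noteq> 1" using j unfolding Sr_def S_def by auto
        have "i \<le> j"
        proof (rule ccontr)
          assume "\<not> i \<le> j"
          then have "r i \<le> r j" unfolding r_def by simp
          then have "x (r i) \<le> x (r j)" using srt rI[OF iI] rI[OF jI] unfolding I_def by auto
          moreover have "x (r j) \<le> 1" using rng rI[OF jI] unfolding I_def by auto
          ultimately show False using xi xj by auto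
        qed
        then show "y i \<le> y j" using srt iI jI unfolding I_def by auto
      qed
    qed
    have sz: "size M1 = size M2" unfolding M1_def M2_def by simp
    have "size (image_mset (\<lambda>_. 0::real) (mset_set (I - B - Sr))) = size (image_mset (\<lambda>_. 0::real) (mset_set (I - B - S)))"
      using sz cB cBr cS cSr unfolding e1 e2 by simp
    then have r3: "rel_mset (\<le>) (image_mset (\<lambda>_. 0::real) (mset_set (I - B - Sr))) (image_mset (\<lambda>_. 0::real) (mset_set (I - B - S)))"
      by (rule rel_all) simp
    have "rel_mset (\<le>) M1 M2" unfolding e1 e2 using rel_plus[OF rel_plus[OF r1 r2] r3] by simp
    then show ?thesis using Phi_mono[OF u _ s1 s2] by simp
  qed
  then show ?thesis unfolding M1_def M2_def I_def r_def .
qed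



lemma iter_Phi:
  assumes u: "uninorm U"
  shows "n \<ge> 1 \<Longrightarrow> \<forall>i\<in>{1..n}. t i \<in> {0..1} \<Longrightarrow> iter U t n = Phi U (image_mset t (mset_set {1..n}))"
proof (induction n)
  case 0 then show ?case by simp
next
  case (Suc m)
  show ?case
  proof (cases m)
    case 0
    have t1: "t 1 \<in> {0..1}" using Suc.prems by auto
    have "Phi U (image_mset t (mset_set {1..Suc m})) = U (t 1) (unit_of U)"
      using 0 Phi_add[OF u t1, of "{#}"] by (simp add: Phi_empty)
    also have "\<dots> = U (unit_of U) (t 1)" using un_comm[OF u t1] unit_of[OF u] by auto
    also have "\<dots> = t 1" using unit_of[OF u] t1 by auto
    finally show ?thesis using 0 by simp
  next
    case (Suc k)
    have tl: "t (Suc (Suc k)) \<in> {0..1}" using Suc.prems \<open>m = Suc k\<close> by auto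
    have IH: "iter U t (Suc k) = Phi U (image_mset t (mset_set {1..Suc k}))"
      using Suc.IH Suc.prems \<open>m = Suc k\<close> by auto
    have ms: "mset_set {1..Suc (Suc k)} = add_mset (Suc (Suc k)) (mset_set {1..Suc k})"
      by (simp add: atLeastAtMostSuc_conv)
    have p: "Phi U (image_mset t (mset_set {1..Suc k})) \<in> {0..1}" by (rule Phi_rng[OF u])
    have "iter U t (Suc m) = U (Phi U (image_mset t (mset_set {1..Suc k}))) (t (Suc (Suc k)))"
      using IH \<open>m = Suc k\<close> by simp
    also have "\<dots> = U (t (Suc (Suc k))) (Phi U (image_mset t (mset_set {1..Suc k})))"
      using un_comm[OF u p tl] .
    also have "\<dots> = Phi U (image_mset t (mset_set {1..Suc m}))"
      using Phi_add[OF u tl] ms \<open>m = Suc k\<close> by simp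
    finally show ?thesis .
  qed
qed

definition dualU :: "(real \<Rightarrow> real \<Rightarrow> real) \<Rightarrow> real \<Rightarrow> real \<Rightarrow> real" where
  "dualU U a b = 1 - U (1 - a) (1 - b)"

lemma neg_rng: "(a::real) \<in> {0..1} \<Longrightarrow> 1 - a \<in> {0..1}" by auto

lemma dual_uninorm: assumes u: "uninorm U" shows "uninorm (dualU U)"
proof -
  obtain e where e: "e \<in> {0..1}" "\<forall>x\<in>{0..1}. U e x = x" using un_unit_ex[OF u] by blast
  show ?thesis unfolding uninorm_def dualU_def
  proof (intro conjI ballI impI)
    fix a b assume "a \<in> {0..(1::real)}" "b \<in> {0..(1::real)}"
    then show "1 - U (1 - a) (1 - b) \<in> {0..1}" using un_rng[OF u, of "1-a" "1-b"] by auto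
  next
    fix a b assume "a \<in> {0..(1::real)}" "b \<in> {0..(1::real)}"
    then show "1 - U (1 - a) (1 - b) = 1 - U (1 - b) (1 - a)" using un_comm[OF u, of "1-a" "1-b"] by auto
  next
    fix a b c assume abc: "a \<in> {0..(1::real)}" "b \<in> {0..(1::real)}" "c \<in> {0..(1::real)}"
    then show "1 - U (1 - (1 - U (1 - a) (1 - b))) (1 - c) = 1 - U (1 - a) (1 - (1 - U (1 - b) (1 - c)))"
      using un_assoc[OF u, of "1-a" "1-b" "1-c"] by auto
  next
    fix a b c assume abc: "a \<in> {0..(1::real)}" "b \<in> {0..(1::real)}" "c \<in> {0..(1::real)}" "a \<le> b"
    then show "1 - U (1 - a) (1 - c) \<le> 1 - U (1 - b) (1 - c)"
      using un_mono1[OF u, of "1-b" "1-a" "1-c"] by auto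
  next
    show "\<exists>e\<in>{0..1}. \<forall>x\<in>{0..1}. 1 - U (1 - e) (1 - x) = x"
      using e by (intro bexI[of _ "1 - e"]) auto
  qed
qed

lemma dual_disj: "conjunctive_uninorm U \<Longrightarrow> disjunctive_uninorm (dualU U)"
  unfolding conjunctive_uninorm_def disjunctive_uninorm_def
  using dual_uninorm un_comm[of U 0 1] by (auto simp: dualU_def)

lemma unit_dual: assumes u: "uninorm U" shows "unit_of (dualU U) = 1 - unit_of U"
proof (rule unit_of_unique[OF dual_uninorm[OF u]])
  show "1 - unit_of U \<in> {0..1}" using unit_of[OF u] by auto
  show "\<forall>x\<in>{0..1}. dualU U (1 - unit_of U) x = x"
    using unit_of[OF u] by (auto simp: dualU_def)
qed

lemma Phi_dual: assumes u: "uninorm U"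
  shows "set_mset M \<subseteq> {0..1} \<Longrightarrow> Phi U M = 1 - Phi (dualU U) (image_mset (\<lambda>a. 1 - a) M)"
proof (induction M)
  case empty then show ?case using unit_dual[OF u] by (simp add: Phi_empty)
next
  case (add a M)
  have a: "a \<in> {0..1}" using add.prems by auto
  have IH: "Phi U M = 1 - Phi (dualU U) (image_mset (\<lambda>a. 1 - a) M)" using add by auto
  have "Phi (dualU U) (image_mset (\<lambda>a. 1 - a) (add_mset a M))
      = dualU U (1 - a) (Phi (dualU U) (image_mset (\<lambda>a. 1 - a) M))"
    using Phi_add[OF dual_uninorm[OF u] neg_rng[OF a]] by simp
  also have "\<dots> = 1 - U a (Phi U M)" using IH by (simp add: dualU_def)
  finally show ?case using Phi_add[OF u a] by simp
qed

lemma dmax_dmin: "1 - drastic_max a b = drastic_min (1 - a) (1 - b)"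
  by (auto simp: drastic_max_def drastic_min_def max_def min_def)

lemma dmax_rng: "a \<in> {0..1} \<Longrightarrow> b \<in> {0..1} \<Longrightarrow> drastic_max a b \<in> {0..1}"
  by (auto simp: drastic_max_def max_def min_def)

lemma conv:
  fixes x y :: "nat \<Rightarrow> real"
  assumes u: "uninorm U"
    and rng: "\<forall>i\<in>{1..n}. x i \<in> {0..1} \<and> y i \<in> {0..1}"
    and tI: "\<forall>i\<in>{1..n}. \<tau> i \<in> {1..n}"
  shows "Phi U (image_mset (\<lambda>i. drastic_max (x (\<tau> i)) (y i)) (mset_set {1..n}))
    = 1 - Phi (dualU U) (image_mset (\<lambda>k. drastic_min ((\<lambda>k. 1 - x (n + 1 - k)) (n + 1 - \<tau> (n + 1 - k)))
                                                     ((\<lambda>k. 1 - y (n + 1 - k)) k)) (mset_set {1..n}))"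
proof -
  define I where "I = {1..n}"
  define r where "r = (\<lambda>i::nat. n + 1 - i)"
  have rb: "bij_betw r I I" unfolding r_def I_def by (rule rev_bij)
  have fin: "finite I" unfolding I_def by simp
  have sm: "set_mset (image_mset (\<lambda>i. drastic_max (x (\<tau> i)) (y i)) (mset_set I)) \<subseteq> {0..1}"
    using fin rng tI dmax_rng unfolding I_def by auto
  have "image_mset (\<lambda>a. 1 - a) (image_mset (\<lambda>i. drastic_max (x (\<tau> i)) (y i)) (mset_set I))
      = image_mset (\<lambda>i. drastic_min (1 - x (\<tau> i)) (1 - y i)) (mset_set I)"
    by (simp add: image_mset.compositionality comp_def dmax_dmin)
  also have "\<dots> = image_mset (\<lambda>k. drastic_min (1 - x (\<tau> (r k))) (1 - y (r k))) (mset_set I)"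
    by (rule reindex[OF rb])
  also have "\<dots> = image_mset (\<lambda>k. drastic_min ((\<lambda>k. 1 - x (n + 1 - k)) (n + 1 - \<tau> (n + 1 - k)))
                                                     ((\<lambda>k. 1 - y (n + 1 - k)) k)) (mset_set I)"
  proof (rule image_mset_cong)
    fix k assume "k \<in># mset_set I"
    then have k: "k \<in> I" using fin by simp
    then have "r k \<in> I" unfolding r_def I_def by auto
    then have "\<tau> (r k) \<in> I" using tI unfolding I_def by auto
    then have "n + 1 - (n + 1 - \<tau> (r k)) = \<tau> (r k)" unfolding I_def by auto
    then show "drastic_min (1 - x (\<tau> (r k))) (1 - y (r k)) =
      drastic_min ((\<lambda>k. 1 - x (n + 1 - k)) (n + 1 - \<tau> (n + 1 - k))) ((\<lambda>k. 1 - y (n + 1 - k)) k)"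
      unfolding r_def by simp
  qed
  finally show ?thesis using Phi_dual[OF u sm] unfolding I_def by simp
qed


lemma part1:
  assumes d: "disjunctive_uninorm U"
  shows "rearrangement_ineq drastic_min U"
  unfolding rearrangement_ineq_def
proof (intro allI impI)
  fix n :: nat and x y :: "nat \<Rightarrow> real" and \<sigma>
  assume n: "n \<ge> 1" and rng0: "\<forall>i\<in>{1..n}. 0 \<le> x i \<and> x i \<le> 1 \<and> 0 \<le> y i \<and> y i \<le> 1"
    and srt: "\<forall>i j. 1 \<le> i \<longrightarrow> i \<le> j \<longrightarrow> j \<le> n \<longrightarrow> x i \<le> x j \<and> y i \<le> y j"
    and p: "\<sigma> permutes {1..n}"
  have u: "uninorm U" using d by (simp add: disjunctive_uninorm_def)
  have rng: "\<forall>i\<in>{1..n}. x i \<in> {0..1} \<and> y i \<in> {0..1}" using rng0 by auto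
  have bij: "bij_betw \<sigma> {1..n} {1..n}" by (rule permutes_imp_bij[OF p])
  have sI: "\<sigma> i \<in> {1..n}" if "i \<in> {1..n}" for i using bij that by (meson bij_betw_apply)
  have e1: "iter U (\<lambda>i. drastic_min (x (n + 1 - i)) (y i)) n
      = Phi U (image_mset (\<lambda>i. drastic_min (x (n + 1 - i)) (y i)) (mset_set {1..n}))"
  proof (rule iter_Phi[OF u n], intro ballI)
    fix i assume "i \<in> {1..n}"
    then have "n + 1 - i \<in> {1..n}" by auto
    then show "drastic_min (x (n + 1 - i)) (y i) \<in> {0..1}" using rng \<open>i \<in> {1..n}\<close> dmin_rng by blast
  qed
  have e2: "iter U (\<lambda>i. drastic_min (x (\<sigma> i)) (y i)) n
      = Phi U (image_mset (\<lambda>i. drastic_min (x (\<sigma> i)) (y i)) (mset_set {1..n}))"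
  proof (rule iter_Phi[OF u n], intro ballI)
    fix i assume i: "i \<in> {1..n}"
    then have "\<sigma> i \<in> {1..n}" using sI by blast
    then show "drastic_min (x (\<sigma> i)) (y i) \<in> {0..1}" using rng i dmin_rng by blast
  qed
  have e3: "iter U (\<lambda>i. drastic_min (x i) (y i)) n
      = Phi U (image_mset (\<lambda>i. drastic_min (x i) (y i)) (mset_set {1..n}))"
    by (rule iter_Phi[OF u n]) (use rng dmin_rng in blast)
  show "iter U (\<lambda>i. drastic_min (x (n + 1 - i)) (y i)) n \<le> iter U (\<lambda>i. drastic_min (x (\<sigma> i)) (y i)) n \<and>
        iter U (\<lambda>i. drastic_min (x (\<sigma> i)) (y i)) n \<le> iter U (\<lambda>i. drastic_min (x i) (y i)) n"
    unfolding e1 e2 e3 using p1_lower[OF d n rng srt bij] p1_upper[OF d n rng srt bij] by simp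
qed

lemma part2:
  assumes c: "conjunctive_uninorm U"
  shows "dual_rearrangement_ineq U drastic_max"
  unfolding dual_rearrangement_ineq_def
proof (intro allI impI)
  fix n :: nat and x y :: "nat \<Rightarrow> real" and \<sigma>
  assume n: "n \<ge> 1" and rng0: "\<forall>i\<in>{1..n}. 0 \<le> x i \<and> x i \<le> 1 \<and> 0 \<le> y i \<and> y i \<le> 1"
    and srt: "\<forall>i j. 1 \<le> i \<longrightarrow> i \<le> j \<longrightarrow> j \<le> n \<longrightarrow> x i \<le> x j \<and> y i \<le> y j"
    and p: "\<sigma> permutes {1..n}"
  have u: "uninorm U" using c by (simp add: conjunctive_uninorm_def)
  have d: "disjunctive_uninorm (dualU U)" by (rule dual_disj[OF c])
  have rng: "\<forall>i\<in>{1..n}. x i \<in> {0..1} \<and> y i \<in> {0..1}" using rng0 by auto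
  have bij: "bij_betw \<sigma> {1..n} {1..n}" by (rule permutes_imp_bij[OF p])
  have sI: "\<forall>i\<in>{1..n}. \<sigma> i \<in> {1..n}" using bij by (meson bij_betw_apply)
  define r where "r = (\<lambda>i::nat. n + 1 - i)"
  have rb: "bij_betw r {1..n} {1..n}" unfolding r_def by (rule rev_bij)
  have rI: "\<forall>i\<in>{1..n}. r i \<in> {1..n}" unfolding r_def by auto
  have idI: "\<forall>i\<in>{1..n}. (\<lambda>i. i) i \<in> {1..n}" by auto
  define xd where "xd = (\<lambda>k. 1 - x (n + 1 - k))"
  define yd where "yd = (\<lambda>k. 1 - y (n + 1 - k))"
  define \<tau> where "\<tau> = (\<lambda>k. n + 1 - \<sigma> (n + 1 - k))"
  have \<tau>eq: "\<tau> = r \<circ> \<sigma> \<circ> r" unfolding \<tau>_def r_def by auto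
  have tb: "bij_betw \<tau> {1..n} {1..n}" unfolding \<tau>eq
    by (rule bij_betw_trans[OF rb bij_betw_trans[OF bij rb]])
  have rngd: "\<forall>i\<in>{1..n}. xd i \<in> {0..1} \<and> yd i \<in> {0..1}"
  proof
    fix i assume "i \<in> {1..n}"
    then have "n + 1 - i \<in> {1..n}" by auto
    then show "xd i \<in> {0..1} \<and> yd i \<in> {0..1}" using rng unfolding xd_def yd_def by auto
  qed
  have srtd: "\<forall>i j. 1 \<le> i \<longrightarrow> i \<le> j \<longrightarrow> j \<le> n \<longrightarrow> xd i \<le> xd j \<and> yd i \<le> yd j"
  proof (intro allI impI)
    fix i j :: nat assume "1 \<le> i" "i \<le> j" "j \<le> n"
    then have "x (n + 1 - j) \<le> x (n + 1 - i) \<and> y (n + 1 - j) \<le> y (n + 1 - i)"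
      using srt by auto
    then show "xd i \<le> xd j \<and> yd i \<le> yd j" unfolding xd_def yd_def by auto
  qed
  define Pr where "Pr = Phi (dualU U) (image_mset (\<lambda>k. drastic_min (xd (n + 1 - k)) (yd k)) (mset_set {1..n}))"
  define Ps where "Ps = Phi (dualU U) (image_mset (\<lambda>k. drastic_min (xd (\<tau> k)) (yd k)) (mset_set {1..n}))"
  define Pid where "Pid = Phi (dualU U) (image_mset (\<lambda>k. drastic_min (xd k) (yd k)) (mset_set {1..n}))"
  have l1: "Pr \<le> Ps" unfolding Pr_def Ps_def by (rule p1_lower[OF d n rngd srtd tb])
  have l2: "Ps \<le> Pid" unfolding Pid_def Ps_def by (rule p1_upper[OF d n rngd srtd tb])
  have cs: "Phi U (image_mset (\<lambda>i. drastic_max (x (\<sigma> i)) (y i)) (mset_set {1..n})) = 1 - Ps"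
    using conv[OF u rng sI] unfolding Ps_def xd_def yd_def \<tau>_def by simp
  have cr0: "Phi U (image_mset (\<lambda>i. drastic_max (x (r i)) (y i)) (mset_set {1..n}))
     = 1 - Phi (dualU U) (image_mset (\<lambda>k. drastic_min (xd (n + 1 - r (n + 1 - k))) (yd k)) (mset_set {1..n}))"
    using conv[OF u rng rI] unfolding xd_def yd_def by simp
  have "image_mset (\<lambda>k. drastic_min (xd (n + 1 - r (n + 1 - k))) (yd k)) (mset_set {1..n})
      = image_mset (\<lambda>k. drastic_min (xd (n + 1 - k)) (yd k)) (mset_set {1..n})"
    by (rule image_mset_cong) (auto simp: r_def)
  then have cr: "Phi U (image_mset (\<lambda>i. drastic_max (x (n + 1 - i)) (y i)) (mset_set {1..n})) = 1 - Pr"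
    using cr0 unfolding Pr_def r_def by simp
  have ci0: "Phi U (image_mset (\<lambda>i. drastic_max (x ((\<lambda>i. i) i)) (y i)) (mset_set {1..n}))
     = 1 - Phi (dualU U) (image_mset (\<lambda>k. drastic_min (xd (n + 1 - (n + 1 - k))) (yd k)) (mset_set {1..n}))"
    using conv[OF u rng idI] unfolding xd_def yd_def by simp
  have "image_mset (\<lambda>k. drastic_min (xd (n + 1 - (n + 1 - k))) (yd k)) (mset_set {1..n})
      = image_mset (\<lambda>k. drastic_min (xd k) (yd k)) (mset_set {1..n})"
    by (rule image_mset_cong) auto
  then have ci: "Phi U (image_mset (\<lambda>i. drastic_max (x i) (y i)) (mset_set {1..n})) = 1 - Pid"
    using ci0 unfolding Pid_def by simp
  have e1: "iter U (\<lambda>i. drastic_max (x (n + 1 - i)) (y i)) n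
      = Phi U (image_mset (\<lambda>i. drastic_max (x (n + 1 - i)) (y i)) (mset_set {1..n}))"
  proof (rule iter_Phi[OF u n], intro ballI)
    fix i assume "i \<in> {1..n}"
    then have "n + 1 - i \<in> {1..n}" by auto
    then show "drastic_max (x (n + 1 - i)) (y i) \<in> {0..1}" using rng \<open>i \<in> {1..n}\<close> dmax_rng by blast
  qed
  have e2: "iter U (\<lambda>i. drastic_max (x (\<sigma> i)) (y i)) n
      = Phi U (image_mset (\<lambda>i. drastic_max (x (\<sigma> i)) (y i)) (mset_set {1..n}))"
  proof (rule iter_Phi[OF u n], intro ballI)
    fix i assume i: "i \<in> {1..n}"
    then have "\<sigma> i \<in> {1..n}" using sI by blast
    then show "drastic_max (x (\<sigma> i)) (y i) \<in> {0..1}" using rng i dmax_rng by blast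
  qed
  have e3: "iter U (\<lambda>i. drastic_max (x i) (y i)) n
      = Phi U (image_mset (\<lambda>i. drastic_max (x i) (y i)) (mset_set {1..n}))"
    by (rule iter_Phi[OF u n]) (use rng dmax_rng in blast)
  show "iter U (\<lambda>i. drastic_max (x (n + 1 - i)) (y i)) n \<ge> iter U (\<lambda>i. drastic_max (x (\<sigma> i)) (y i)) n \<and>
        iter U (\<lambda>i. drastic_max (x (\<sigma> i)) (y i)) n \<ge> iter U (\<lambda>i. drastic_max (x i) (y i)) n"
    unfolding e1 e2 e3 cs cr ci using l1 l2 by simp
qed

theorem theorem11:
  fixes U :: "real \<Rightarrow> real \<Rightarrow> real"
  shows "(disjunctive_uninorm U \<longrightarrow> rearrangement_ineq drastic_min U) \<and>
         (conjunctive_uninorm U \<longrightarrow> dual_rearrangement_ineq U drastic_max)"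
  using part1 part2 by blast


end
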